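(* Let $\alpha=2\sqrt7-4$. If $W$ is a balanced tetrahedral erasure channel with $Q(W)\ge\alpha$, then $Q(W^{s})\ge\alpha$ and $Q(W^{p})\ge\alpha$.
   Context: $\mathrm{TEC}(p,q,r,s,t)$ denotes a tetrahedral erasure channel with parameters $p,q,r,s,t\ge0$ summing to $1$. Its entropy is $H=\frac{q+r+s}{2}+t$, its edge mass is $E=q+r+s$, and its Quetelet index is $Q=E/(H(1-H))$ (defined when $0<H<1$). It is balanced if $q=r=s$. For $W=\mathrm{TEC}(p,q,r,s,t)$, the serial child is $W^{s}=\mathrm{TEC}(p^2,\ ps+sq+qp,\ pq+qr+rp,\ pr+rs+sp,\ 1-\text{(sum of the other four)})$ and the parallel child is $W^{p}=\mathrm{TEC}(1-\text{(sum of the other four)},\ ts+sq+qt,\ tq+qr+rt,\ tr+rs+st,\ t^2)$. (For a balanced $W$ with $H(W)=x$, $E(W)=y$ one has $H(W^{p})=x^2-y^2/12$, $E(W^{p})=2xy-2y^2/3$, $H(W^{s})=2x-x^2+y^2/12$, $E(W^{s})=2y-2xy-2y^2/3$.) *)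

theory Defs
  imports Complex_Main
begin

record tec =
  tp :: real
  tq :: real
  tr :: real
  ts :: real
  tt :: real

definition is_TEC :: "tec \<Rightarrow> bool" where
  "is_TEC W \<longleftrightarrow> tp W \<ge> 0 \<and> tq W \<ge> 0 \<and> tr W \<ge> 0 \<and> ts W \<ge> 0 \<and> tt W \<ge> 0
     \<and> tp W + tq W + tr W + ts W + tt W = 1"

definition TEC :: "real \<Rightarrow> real \<Rightarrow> real \<Rightarrow> real \<Rightarrow> real \<Rightarrow> tec" where
  "TEC p q r s t = \<lparr>tp = p, tq = q, tr = r, ts = s, tt = t\<rparr>"

definition tec_H :: "tec \<Rightarrow> real" where
  "tec_H W = (tq W + tr W + ts W) / 2 + tt W"

definition tec_E :: "tec \<Rightarrow> real" where
  "tec_E W = tq W + tr W + ts W"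

text \<open>Quetelet index; only meaningful when 0 < H < 1 (with HOL's division, x/0 = 0).\<close>
definition tec_Q :: "tec \<Rightarrow> real" where
  "tec_Q W = tec_E W / (tec_H W * (1 - tec_H W))"

definition balanced :: "tec \<Rightarrow> bool" where
  "balanced W \<longleftrightarrow> tq W = tr W \<and> tr W = ts W"

definition serial :: "tec \<Rightarrow> tec" where
  "serial W = (let p = tp W; q = tq W; r = tr W; s = ts W;
       p' = p^2; q' = p*s + s*q + q*p; r' = p*q + q*r + r*p; s' = p*r + r*s + s*p
     in TEC p' q' r' s' (1 - (p' + q' + r' + s')))"

definition parallel :: "tec \<Rightarrow> tec" where
  "parallel W = (let q = tq W; r = tr W; s = ts W; t = tt W;
       q' = t*s + s*q + q*t; r' = t*q + q*r + r*t; s' = t*r + r*s + s*t; t' = t^2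
     in TEC (1 - (q' + r' + s' + t')) q' r' s' t')"

end

theory Submission
  imports Defs
begin

definition FF :: "real \<Rightarrow> real \<Rightarrow> real \<Rightarrow> real" where
 "FF a x y = 2*x*y - 2*y^2/3 - a*(x^2 - y^2/12)*(1 - (x^2 - y^2/12))"

lemma interp: "(h-l) * FF a x y = (h-y)*FF a x l + (y-l)*FF a x h
   + (h-l)*(y-l)*(h-y)*(2/3 - a/12 + a*x^2/6 - a*(l^2+h^2+y^2+l*h+l*y+h*y)/144)"
  unfolding FF_def by (simp add: field_simps power2_eq_square power3_eq_cube)

lemma lo_eq: assumes "a^2 + 8*a - 12 = 0"
  shows "FF a x (a*x*(1-x)) = x^2*a*(1-x)^2*(a^2*(1-x)*(1+x)/6 + a^4*(1-x)^2*x^2/144)"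
  using assms unfolding FF_def by algebra

lemma lo_nn: assumes "a^2 + 8*a - 12 = 0" "0 \<le> a" "0 \<le> x" "x \<le> 1"
  shows "FF a x (a*x*(1-x)) \<ge> 0"
  unfolding lo_eq[OF assms(1)] using assms(2-4) by (intro mult_nonneg_nonneg add_nonneg_nonneg) auto

lemma hi1: assumes "0 \<le> x" "a \<le> 2" "0 \<le> a" shows "FF a x (2*x) \<ge> 0"
proof -
  have "FF a x (2*x) = (2*x^2/3)*(2 - a + 2*a*x^2/3)" unfolding FF_def by (simp add: field_simps power2_eq_square)
  moreover have "2 - a + 2*a*x^2/3 \<ge> 0" using assms by simp
  ultimately show ?thesis by (metis mult_nonneg_nonneg zero_le_power2 divide_nonneg_pos
      mult_nonneg_nonneg zero_le_numeral zero_less_numeral)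
qed

lemma hi2: assumes "1/2 \<le> x" "x \<le> 1" "a \<le> 2" "0 \<le> a" shows "FF a x (2*(1-x)) \<ge> 0"
proof -
  define d where "d = 1 - x"
  have d0: "0 \<le> d" "d \<le> 1/2" using assms d_def by auto
  have eq: "FF a x (2*(1-x)) = d*(4 - 20*d/3 - a*((1-2*d+2*d^2/3)*(2-2*d/3)))"
    unfolding FF_def d_def by (simp add: field_simps power2_eq_square power3_eq_cube)
  have P: "(1-2*d+2*d^2/3)*(2-2*d/3) \<ge> 0" using d0 by (intro mult_nonneg_nonneg) auto
  have "a*((1-2*d+2*d^2/3)*(2-2*d/3)) \<le> 2*((1-2*d+2*d^2/3)*(2-2*d/3))"
    using P assms by (intro mult_right_mono) auto
  moreover have "4 - 20*d/3 - 2*((1-2*d+2*d^2/3)*(2-2*d/3)) = (8*d/3)*(1-2*d+d^2/3)"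
    by (simp add: field_simps power2_eq_square power3_eq_cube)
  moreover have "(8*d/3)*(1-2*d+d^2/3) \<ge> 0" using d0 by (intro mult_nonneg_nonneg) auto
  ultimately have "4 - 20*d/3 - a*((1-2*d+2*d^2/3)*(2-2*d/3)) \<ge> 0" by linarith
  then show ?thesis unfolding eq using d0 by simp
qed

lemma core:
  assumes a: "a^2 + 8*a - 12 = 0" "0 \<le> a" "a \<le> 2"
    and x: "0 < x" "x < 1"
    and y: "a*x*(1-x) \<le> y" "y \<le> 2*x" "y \<le> 2*(1-x)"
  shows "FF a x y \<ge> 0"
proof -
  define l where "l = a*x*(1-x)"
  define h where "h = min (2*x) (2*(1-x))"
  have l0: "0 \<le> l" using a x l_def by simp
  have yh: "y \<le> h" using y h_def by simp
  have h1: "h \<le> 1" using h_def by simp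
  have ly: "l \<le> y" using y l_def by simp
  have Fl: "FF a x l \<ge> 0" unfolding l_def using lo_nn a x by simp
  have Fh: "FF a x h \<ge> 0"
  proof (cases "x \<le> 1/2")
    case True
    then have "h = 2*x" using h_def by simp
    then show ?thesis using hi1 a x by simp
  next
    case False
    then have "h = 2*(1-x)" using h_def by simp
    then show ?thesis using hi2 a x False by simp
  qed
  have S: "l^2+h^2+y^2+l*h+l*y+h*y \<le> 6"
  proof -
    have "l \<le> 1" "y \<le> 1" "0 \<le> y" "0 \<le> h" using l0 ly yh h1 by linarith+
    then have "l^2 \<le> 1" "h^2 \<le> 1" "y^2 \<le> 1" "l*h \<le> 1" "l*y \<le> 1" "h*y \<le> 1"
      using l0 h1 by (auto intro: mult_le_one simp: power2_eq_square)
    then show ?thesis by linarith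
  qed
  have K: "2/3 - a/12 + a*x^2/6 - a*(l^2+h^2+y^2+l*h+l*y+h*y)/144 \<ge> 0"
  proof -
    have "a*(l^2+h^2+y^2+l*h+l*y+h*y) \<le> a*6" using S a by (intro mult_left_mono) auto
    moreover have "a*x^2 \<ge> 0" using a by simp
    ultimately show ?thesis using a by linarith
  qed
  show ?thesis
  proof (cases "l < h")
    case True
    have "(h-l) * FF a x y \<ge> 0"
      unfolding interp[of h l a x y]
      using Fl Fh K ly yh True
      by (intro add_nonneg_nonneg mult_nonneg_nonneg) auto
    then show ?thesis using True by (simp add: zero_le_mult_iff)
  next
    case False
    then have "y = l" using ly yh by linarith
    then show ?thesis using Fl by simp
  qed
qed

lemma afacts: "(2 * sqrt 7 - 4)^2 + 8*(2 * sqrt 7 - 4) - 12 = 0" "0 \<le> 2 * sqrt 7 - 4" "2 * sqrt 7 - 4 \<le> (2::real)"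
proof -
  have s: "(sqrt 7)^2 = (7::real)" by simp
  show "(2 * sqrt 7 - 4)^2 + 8*(2 * sqrt 7 - 4) - 12 = (0::real)"
    using s by (simp add: power2_eq_square algebra_simps)
  have "2 \<le> sqrt (7::real)" by (rule real_le_rsqrt) simp
  then show "0 \<le> 2 * sqrt 7 - 4" by simp
  have "sqrt 7 \<le> (3::real)" by (rule real_sqrt_le_iff[THEN iffD2, of 7 "3^2", simplified]) 
  then show "2 * sqrt 7 - 4 \<le> (2::real)" by simp
qed

theorem mainTheorem5:
  fixes W :: tec
  assumes "is_TEC W" and "balanced W"
    and "0 < tec_H W" and "tec_H W < 1"
    and "tec_Q W \<ge> 2 * sqrt 7 - 4"
  shows "0 < tec_H (serial W) \<and> tec_H (serial W) < 1 \<and> tec_Q (serial W) \<ge> 2 * sqrt 7 - 4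
         \<and> 0 < tec_H (parallel W) \<and> tec_H (parallel W) < 1 \<and> tec_Q (parallel W) \<ge> 2 * sqrt 7 - 4"
proof -
  define a :: real where "a = 2 * sqrt 7 - 4"
  note af = afacts[folded a_def]
  define e where "e = tq W"
  define t where "t = tt W"
  define x where "x = 3*e/2 + t"
  define y where "y = 3*e"
  have bal: "tr W = e" "ts W = e" using assms(2) e_def unfolding balanced_def by auto
  have e0: "e \<ge> 0" "t \<ge> 0" "3*e + t \<le> 1" and pe: "tp W = 1 - 3*e - t"
    using assms(1) bal e_def t_def unfolding is_TEC_def by auto
  have Hx: "tec_H W = x" unfolding tec_H_def x_def using bal e_def t_def by simp
  have Ey: "tec_E W = y" unfolding tec_E_def y_def using bal e_def by simp
  have x0: "0 < x" "x < 1" using assms(3,4) Hx by auto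
  have den: "x*(1-x) > 0" using x0 by simp
  have ylo: "a*x*(1-x) \<le> y"
  proof -
    have "a \<le> y / (x*(1-x))" using assms(5) unfolding tec_Q_def Hx Ey a_def .
    then show ?thesis using den by (simp add: pos_le_divide_eq mult.assoc)
  qed
  have y2x: "y \<le> 2*x" "y \<le> 2*(1-x)" using e0 x_def y_def by auto
  have y0: "0 \<le> y" using e0 y_def by simp
  have Hp: "tec_H (parallel W) = x^2 - y^2/12"
    unfolding tec_H_def parallel_def TEC_def Let_def unfolding x_def y_def using bal e_def t_def
    by (simp add: field_simps power2_eq_square)
  have Ep: "tec_E (parallel W) = 2*x*y - 2*y^2/3"
    unfolding tec_E_def parallel_def TEC_def Let_def unfolding x_def y_def using bal e_def t_def
    by (simp add: field_simps power2_eq_square)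
  have Hs: "tec_H (serial W) = 1 - ((1-x)^2 - y^2/12)"
    unfolding tec_H_def serial_def TEC_def Let_def pe unfolding x_def y_def using bal e_def t_def
    by (simp add: field_simps power2_eq_square)
  have Es: "tec_E (serial W) = 2*(1-x)*y - 2*y^2/3"
    unfolding tec_E_def serial_def TEC_def Let_def pe unfolding x_def y_def using bal e_def t_def
    by (simp add: field_simps power2_eq_square)
  have gen: "0 < z^2 - y^2/12 \<and> z^2 - y^2/12 < 1 \<and>
      a \<le> (2*z*y - 2*y^2/3) / ((z^2 - y^2/12) * (1 - (z^2 - y^2/12)))"
    if z: "0 < z" "z < 1" "a*z*(1-z) \<le> y" "y \<le> 2*z" "y \<le> 2*(1-z)" for z
  proof -
    have "y^2 \<le> (2*z)^2" using y0 z by (intro power_mono) auto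
    moreover have "z^2 > 0" using z by simp
    ultimately have H0: "0 < z^2 - y^2/12" by (simp add: power_mult_distrib; linarith)
    have "z^2 < 1" using z by (simp add: power_less_one_iff)
    moreover have "y^2 \<ge> 0" by simp
    ultimately have H1: "z^2 - y^2/12 < 1" by linarith
    have pos: "(z^2 - y^2/12) * (1 - (z^2 - y^2/12)) > 0" using H0 H1 by simp
    have "FF a z y \<ge> 0" using core[OF af z] .
    then have "a * ((z^2 - y^2/12) * (1 - (z^2 - y^2/12))) \<le> 2*z*y - 2*y^2/3"
      unfolding FF_def by linarith
    then show ?thesis using H0 H1 pos by (simp add: pos_le_divide_eq)
  qed
  have P: "0 < tec_H (parallel W) \<and> tec_H (parallel W) < 1 \<and> a \<le> tec_Q (parallel W)"
    using gen[of x] x0 ylo y2x unfolding tec_Q_def Hp Ep by simp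
  have S: "0 < 1 - tec_H (serial W) \<and> 1 - tec_H (serial W) < 1 \<and> a \<le> tec_Q (serial W)"
  proof -
    have "0 < 1-x" "1-x < 1" "a*(1-x)*(1-(1-x)) \<le> y" "y \<le> 2*(1-x)" "y \<le> 2*(1-(1-x))"
      using x0 ylo y2x by (auto simp: algebra_simps)
    from gen[OF this] show ?thesis unfolding tec_Q_def Hs Es by (simp add: algebra_simps)
  qed
  show ?thesis using P S a_def by auto
qed

end
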